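(* Let $1<p<\infty$, $v_0,v_1\in\mathscr V_p(0,\infty)$, $1/v_1\in L^{p'}_{\rm loc}(0,\infty)$, and suppose there is $c\in(0,\infty)$ with $\|v_1^{-1}\|_{L^{p'}(0,c)}\|v_0\|_{L^p(0,c)}=\|v_1^{-1}\|_{L^{p'}(c,\infty)}\|v_0\|_{L^p(c,\infty)}=\infty$. Then $L^{p'}_{1/v_0}(0,\infty)\subset\mathscr W_{p',1/v_1}$ and $\|g\|_{\mathscr W_{p',1/v_1}}\lesssim\|g\|_{p',1/v_0}$ for every $g\in L^{p'}_{1/v_0}(0,\infty)$.
   Context: $p'=p/(p-1)$. For $1\le r<\infty$, $\mathscr V_r(0,\infty)$ is the set of $v\in L^r_{\rm loc}(0,\infty)$, $v\ge0$, $\|v\|_{L^1(0,\infty)}\ne0$. For a weight $u$ and $1<r<\infty$, $L^r_u(0,\infty)=\{h:\|h\|_{r,u}:=\|uh\|_{L^r(0,\infty)}<\infty\}$. Under the hypotheses there exist unique strictly increasing absolutely continuous functions $a,b$ on $(0,\infty)$ with $a(t),b(t)\to0$ as $t\to0$, $a(t),b(t)\to\infty$ as $t\to\infty$, $a(t)<t<b(t)$, $\int_{a(t)}^t v_1^{-p'}=\int_t^{b(t)}v_1^{-p'}$ and $\bigl(\int_{a(t)}^{b(t)}v_1^{-p'}\bigr)^{1/p'}\bigl(\int_{a(t)}^{b(t)}v_0^{p}\bigr)^{1/p}=1$ for all $t>0$; $a^{-1}$ is the inverse of $a$, $V_1(t):=\int_{a(t)}^{b(t)}v_1^{-p'}$.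 For $g\in L^1_{\rm loc}(0,\infty)$: $\mathbb G(g)=\Bigl(\int_0^\infty v_1^{-p'}(t)\Bigl|\int_t^{a^{-1}(t)}\frac{g(x)}{V_1(x)}\bigl(\int_{a(x)}^t v_1^{-p'}\bigr)dx\Bigr|^{p'}dt\Bigr)^{1/p'}$, $\mathcal G(g)=\Bigl(\int_0^\infty v_1^{-p'}(t)V_1^{p'}(t)\Bigl|\int_t^{a^{-1}(t)}\frac{g(x)}{V_1(x)}dx\Bigr|^{p'}dt\Bigr)^{1/p'}$; $\mathscr W_{p',1/v_1}=\{g\in L^1_{\rm loc}(0,\infty):\|g\|_{\mathscr W_{p',1/v_1}}:=\mathbb G(g)+\mathcal G(g)<\infty\}$. $A\lesssim B$ means $A\le CB$ with $C$ depending only on $p$. *)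

theory Defs
  imports "HOL-Analysis.Analysis"
begin

text \<open>All functions live on the half line (0,\<infinity>); values outside are irrelevant.
  Norms are ennreal-valued so that the value \<infinity> is expressible.\<close>

definition enn_rt :: "real \<Rightarrow> ennreal \<Rightarrow> ennreal" where
  "enn_rt r X = (if X = \<infinity> then \<infinity> else ennreal (enn2real X powr (1 / r)))"

definition Lnorm :: "real \<Rightarrow> (real \<Rightarrow> real) \<Rightarrow> real set \<Rightarrow> ennreal" where
  "Lnorm r f A = enn_rt r (\<integral>\<^sup>+ x \<in> A. ennreal (\<bar>f x\<bar> powr r) \<partial>lborel)"

text \<open>L^r norm of h u on A, where the weight u = 1/v takes the value \<infinity> where v = 0.\<close>
definition Lnorm_inv :: "real \<Rightarrow> (real \<Rightarrow> real) \<Rightarrow> (real \<Rightarrow> real) \<Rightarrow> real set \<Rightarrow> ennreal" where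
  "Lnorm_inv r v h A = enn_rt r (\<integral>\<^sup>+ x \<in> A.
      (if v x = 0 then (if h x = 0 then 0 else \<infinity>) else ennreal (\<bar>h x / v x\<bar> powr r)) \<partial>lborel)"

definition loc_Lr :: "real \<Rightarrow> (real \<Rightarrow> real) \<Rightarrow> bool" where
  "loc_Lr r f \<longleftrightarrow> set_borel_measurable lborel {0<..} f \<and>
     (\<forall>x y. 0 < x \<longrightarrow> x \<le> y \<longrightarrow> Lnorm r f {x..y} < \<infinity>)"

definition loc_Lr_inv :: "real \<Rightarrow> (real \<Rightarrow> real) \<Rightarrow> bool" where
  "loc_Lr_inv r v \<longleftrightarrow> (\<forall>x y. 0 < x \<longrightarrow> x \<le> y \<longrightarrow> Lnorm_inv r v (\<lambda>_. 1) {x..y} < \<infinity>)"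

definition weight_class :: "real \<Rightarrow> (real \<Rightarrow> real) \<Rightarrow> bool" where
  "weight_class r v \<longleftrightarrow> loc_Lr r v \<and> (\<forall>x>0. v x \<ge> 0) \<and> Lnorm 1 v {0<..} \<noteq> 0"

definition abs_cont_on :: "real set \<Rightarrow> (real \<Rightarrow> real) \<Rightarrow> bool" where
  "abs_cont_on S f \<longleftrightarrow> (\<forall>e>0. \<exists>d>0. \<forall>(n::nat) l r.
      (\<forall>i<n. l i \<le> r i \<and> {l i..r i} \<subseteq> S) \<and>
      (\<forall>i<n. \<forall>j<n. i \<noteq> j \<longrightarrow> r i \<le> l j \<or> r j \<le> l i) \<and>
      (\<Sum>i<n. r i - l i) < d \<longrightarrow> (\<Sum>i<n. \<bar>f (r i) - f (l i)\<bar>) < e)"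

definition loc_abs_cont :: "(real \<Rightarrow> real) \<Rightarrow> bool" where
  "loc_abs_cont f \<longleftrightarrow> (\<forall>x y. 0 < x \<longrightarrow> x \<le> y \<longrightarrow> abs_cont_on {x..y} f)"

text \<open>v_1^{-p'} as a real function (v_1 > 0 a.e. under the hypotheses)\<close>
definition wgt :: "real \<Rightarrow> (real \<Rightarrow> real) \<Rightarrow> real \<Rightarrow> real" where
  "wgt q v x = (1 / v x) powr q"

definition Iw :: "real \<Rightarrow> (real \<Rightarrow> real) \<Rightarrow> real \<Rightarrow> real \<Rightarrow> real" where
  "Iw q v s t = (\<integral>x\<in>{s..t}. wgt q v x \<partial>lborel)"

definition ab_funcs :: "real \<Rightarrow> (real \<Rightarrow> real) \<Rightarrow> (real \<Rightarrow> real) \<Rightarrow> (real \<Rightarrow> real) \<Rightarrow> (real \<Rightarrow> real) \<Rightarrow> bool" where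
  "ab_funcs p v0 v1 a b \<longleftrightarrow>
     strict_mono_on {0<..} a \<and> strict_mono_on {0<..} b \<and>
     loc_abs_cont a \<and> loc_abs_cont b \<and>
     (a \<longlongrightarrow> 0) (at_right 0) \<and> (b \<longlongrightarrow> 0) (at_right 0) \<and>
     filterlim a at_top at_top \<and> filterlim b at_top at_top \<and>
     (\<forall>t>0. 0 < a t \<and> a t < t \<and> t < b t) \<and>
     (\<forall>t>0. (\<integral>\<^sup>+x\<in>{a t..t}. ennreal (wgt (p/(p-1)) v1 x) \<partial>lborel)
             = (\<integral>\<^sup>+x\<in>{t..b t}. ennreal (wgt (p/(p-1)) v1 x) \<partial>lborel)) \<and>
     (\<forall>t>0. Lnorm_inv (p/(p-1)) v1 (\<lambda>_. 1) {a t..b t} * Lnorm p v0 {a t..b t} = 1)"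

definition V1fun :: "real \<Rightarrow> (real \<Rightarrow> real) \<Rightarrow> (real \<Rightarrow> real) \<Rightarrow> (real \<Rightarrow> real) \<Rightarrow> real \<Rightarrow> real" where
  "V1fun q v1 a b t = Iw q v1 (a t) (b t)"

definition GG :: "real \<Rightarrow> (real \<Rightarrow> real) \<Rightarrow> (real \<Rightarrow> real) \<Rightarrow> (real \<Rightarrow> real) \<Rightarrow> (real \<Rightarrow> real) \<Rightarrow> ennreal" where
  "GG q v1 a b g = enn_rt q (\<integral>\<^sup>+ t \<in> {0<..}. ennreal (wgt q v1 t *
      \<bar>\<integral>x\<in>{t..inv_into {0<..} a t}. g x / V1fun q v1 a b x * Iw q v1 (a x) t \<partial>lborel\<bar> powr q) \<partial>lborel)"

definition GGc :: "real \<Rightarrow> (real \<Rightarrow> real) \<Rightarrow> (real \<Rightarrow> real) \<Rightarrow> (real \<Rightarrow> real) \<Rightarrow> (real \<Rightarrow> real) \<Rightarrow> ennreal" where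
  "GGc q v1 a b g = enn_rt q (\<integral>\<^sup>+ t \<in> {0<..}. ennreal (wgt q v1 t * V1fun q v1 a b t powr q *
      \<bar>\<integral>x\<in>{t..inv_into {0<..} a t}. g x / V1fun q v1 a b x \<partial>lborel\<bar> powr q) \<partial>lborel)"

definition loc_L1 :: "(real \<Rightarrow> real) \<Rightarrow> bool" where
  "loc_L1 g \<longleftrightarrow> loc_Lr 1 g"

definition in_W :: "real \<Rightarrow> (real \<Rightarrow> real) \<Rightarrow> (real \<Rightarrow> real) \<Rightarrow> (real \<Rightarrow> real) \<Rightarrow> (real \<Rightarrow> real) \<Rightarrow> bool" where
  "in_W q v1 a b g \<longleftrightarrow> loc_L1 g \<and> GG q v1 a b g + GGc q v1 a b g < \<infinity>"

end

theory Submission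
  imports Defs
begin

lemma opt_young:
  fixes p q X A B :: real
  assumes p: "p > 1" and q: "q = p/(p-1)" and A: "0 \<le> A" and B: "0 \<le> B"
    and H: "\<And>l. l > 0 \<Longrightarrow> X \<le> l powr (-q) * A / q + l powr p * B / p"
  shows "X \<le> A powr (1/q) * B powr (1/p)"
proof -
  have q1: "q > 1" using p unfolding q by (simp add: less_divide_eq)
  have pq: "1/p + 1/q = 1"
  proof -
    have "1/q = (p-1)/p" using p unfolding q by simp
    thus ?thesis using p by (simp add: field_simps)
  qed
  show ?thesis
  proof (cases "A = 0")
    case True
    show ?thesis
    proof (rule ccontr)
      assume "\<not> ?thesis"
      hence X: "X > 0" using True by simp
      show False
      proof (cases "B = 0")
        case True
        with H[of 1] X \<open>A = 0\<close> show False by simp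
      next
        case False
        define l where "l = (X * p / (2*B)) powr (1/p)"
        have l: "l > 0" using X p B False by (simp add: l_def)
        have "l powr p = X * p / (2*B)" unfolding l_def using X p B False
          by (simp add: powr_powr)
        hence "l powr p * B / p = X/2" using p False by (simp add: field_simps)
        with H[OF l] X \<open>A = 0\<close> show False by simp
      qed
    qed
  next
    case Apos: False
    hence A': "A > 0" using A by simp
    show ?thesis
    proof (cases "B = 0")
      case True
      show ?thesis
      proof (rule ccontr)
        assume "\<not> ?thesis"
        hence X: "X > 0" using True by simp
        define l where "l = (2*A/(q*X)) powr (1/q)"
        have l: "l > 0" using X q1 A' by (simp add: l_def)
        have "l powr (-q) = (2*A/(q*X)) powr (-1)" unfolding l_def using X q1 A'
          by (simp add: powr_powr)
        also have "\<dots> = q*X/(2*A)" using X q1 A' by (simp add: powr_minus_divide)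
        finally have "l powr (-q) * A / q = X/2" using q1 A' by (simp add: field_simps)
        with H[OF l] X True show False by simp
      qed
    next
      case False
      hence B': "B > 0" using B by simp
      define l where "l = A powr (1/(p*q)) * B powr (-1/(p*q))"
      have l: "l > 0" using A' B' by (simp add: l_def)
      have e1: "l powr (-q) = A powr (-1/p) * B powr (1/p)"
        unfolding l_def using A' B' p q1
        by (simp add: powr_mult powr_powr)
      have e2: "l powr p = A powr (1/q) * B powr (-1/q)"
        unfolding l_def using A' B' p q1
        by (simp add: powr_mult powr_powr)
      have "A powr (-1/p) * A = A powr (1/q)"
      proof -
        have "A powr (-1/p + 1) = A powr (-1/p) * A powr 1" by (rule powr_add)
        hence "A powr (-1/p) * A = A powr (-1/p + 1)" using A' by simp
        also have "-1/p + 1 = 1/q" using pq by simp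
        finally show ?thesis .
      qed
      hence t1: "l powr (-q) * A = A powr (1/q) * B powr (1/p)" using e1 by (simp add: mult_ac)
      have "B powr (-1/q) * B = B powr (1/p)"
      proof -
        have "B powr (-1/q + 1) = B powr (-1/q) * B powr 1" by (rule powr_add)
        hence "B powr (-1/q) * B = B powr (-1/q + 1)" using B' by simp
        also have "-1/q + 1 = 1/p" using pq by simp
        finally show ?thesis .
      qed
      hence t2: "l powr p * B = A powr (1/q) * B powr (1/p)" using e2 by (simp add: mult_ac)
      have "X \<le> l powr (-q) * A / q + l powr p * B / p" using H[OF l] .
      also have "\<dots> = A powr (1/q) * B powr (1/p) * (1/q + 1/p)" using t1 t2 by (simp add: field_simps)
      also have "\<dots> = A powr (1/q) * B powr (1/p)" using pq by simp
      finally show ?thesis .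
    qed
  qed
qed

definition Gfun :: "real \<Rightarrow> (real\<Rightarrow>real) \<Rightarrow> (real\<Rightarrow>real) \<Rightarrow> real \<Rightarrow> ennreal" where
  "Gfun r h v x = (if v x = 0 then (if h x = 0 then 0 else \<infinity>) else ennreal (\<bar>h x / v x\<bar> powr r))"

lemma Lnorm_inv_Gfun: "Lnorm_inv r v h A = enn_rt r (\<integral>\<^sup>+x\<in>A. Gfun r h v x \<partial>lborel)"
  by (simp add: Lnorm_inv_def Gfun_def)

lemma Gfun_meas[measurable]:
  assumes [measurable]: "h \<in> borel_measurable lborel" "v \<in> borel_measurable lborel"
  shows "Gfun r h v \<in> borel_measurable lborel"
  unfolding Gfun_def by measurable

lemma young_pw:
  fixes p q l :: real
  assumes p: "p > 1" and q: "q = p/(p-1)" and l: "l > 0"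
  shows "ennreal \<bar>f\<bar> \<le> ennreal (l powr (-q) / q) * (if u = 0 then (if f = 0 then 0 else \<infinity>) else ennreal (\<bar>f / u\<bar> powr q))
     + ennreal (l powr p / p * \<bar>u\<bar> powr p)"
proof -
  have q1: "q > 1" using p unfolding q by (simp add: less_divide_eq)
  have pq: "1/p + 1/q = 1"
  proof -
    have "1/q = (p-1)/p" using p unfolding q by simp
    thus ?thesis using p by (simp add: field_simps)
  qed
  show ?thesis
  proof (cases "u = 0")
    case True
    show ?thesis
    proof (cases "f = 0")
      case False
      have "l powr (-q) / q > 0" using l q1 by (intro divide_pos_pos) auto
      hence "ennreal (l powr (-q) / q) > 0" by (metis ennreal_less_zero_iff)
      hence "ennreal (l powr (-q) / q) * \<infinity> = \<infinity>" by (metis ennreal_mult_top infinity_ennreal_def order_less_irrefl)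
      thus ?thesis using True False by simp
    qed (simp)
  next
    case False
    define x where "x = \<bar>f/u\<bar> / l"
    define y where "y = l * \<bar>u\<bar>"
    have xy: "x * y = \<bar>f\<bar>" using False l by (simp add: x_def y_def abs_divide)
    have x0: "x \<ge> 0" "y \<ge> 0" using l by (auto simp: x_def y_def)
    have "x * y \<le> x powr q / q + y powr p / p"
      using Youngs_inequality[of q p x y] q1 p pq x0 by (simp add: add.commute)
    also have "x powr q = l powr (-q) * \<bar>f / u\<bar> powr q"
    proof -
      have "x powr q = \<bar>f / u\<bar> powr q / l powr q" unfolding x_def
        by (rule powr_divide)
      thus ?thesis by (simp add: powr_minus divide_inverse mult.commute)
    qed
    also have "y powr p = l powr p * \<bar>u\<bar> powr p"
      using l by (simp add: y_def powr_mult)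
    finally have *: "\<bar>f\<bar> \<le> l powr (-q) / q * \<bar>f / u\<bar> powr q + l powr p / p * \<bar>u\<bar> powr p"
      using xy by simp
    have "ennreal \<bar>f\<bar> \<le> ennreal (l powr (-q) / q * \<bar>f / u\<bar> powr q + l powr p / p * \<bar>u\<bar> powr p)"
      using * by (rule ennreal_leI)
    also have "\<dots> = ennreal (l powr (-q) / q) * ennreal (\<bar>f / u\<bar> powr q) + ennreal (l powr p / p * \<bar>u\<bar> powr p)"
    proof -
      have "ennreal (l powr (-q) / q * \<bar>f / u\<bar> powr q) = ennreal (l powr (-q) / q) * ennreal (\<bar>f / u\<bar> powr q)"
        using q1 by (intro ennreal_mult) auto
      moreover have "ennreal (l powr (-q) / q * \<bar>f / u\<bar> powr q + l powr p / p * \<bar>u\<bar> powr p)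
         = ennreal (l powr (-q) / q * \<bar>f / u\<bar> powr q) + ennreal (l powr p / p * \<bar>u\<bar> powr p)"
        using q1 p by (intro ennreal_plus) auto
      ultimately show ?thesis by simp
    qed
    finally show ?thesis using False by simp
  qed
qed

lemma holder_set:
  fixes p q :: real and f u :: "real \<Rightarrow> real"
  assumes p: "p > 1" and q: "q = p/(p-1)"
    and [measurable]: "f \<in> borel_measurable lborel" "u \<in> borel_measurable lborel" "S \<in> sets lborel"
    and A: "(\<integral>\<^sup>+x\<in>S. Gfun q f u x \<partial>lborel) \<noteq> \<infinity>"
    and B: "(\<integral>\<^sup>+x\<in>S. ennreal (\<bar>u x\<bar> powr p) \<partial>lborel) \<noteq> \<infinity>"
  shows "(\<integral>\<^sup>+x\<in>S. ennreal \<bar>f x\<bar> \<partial>lborel) \<le>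
     ennreal (enn2real (\<integral>\<^sup>+x\<in>S. Gfun q f u x \<partial>lborel) powr (1/q) *
              enn2real (\<integral>\<^sup>+x\<in>S. ennreal (\<bar>u x\<bar> powr p) \<partial>lborel) powr (1/p))"
proof -
  have q1: "q > 1" using p unfolding q by (simp add: less_divide_eq)
  define IA where "IA = (\<integral>\<^sup>+x\<in>S. Gfun q f u x \<partial>lborel)"
  define IB where "IB = (\<integral>\<^sup>+x\<in>S. ennreal (\<bar>u x\<bar> powr p) \<partial>lborel)"
  define X where "X = (\<integral>\<^sup>+x\<in>S. ennreal \<bar>f x\<bar> \<partial>lborel)"
  obtain Ar where Ar: "IA = ennreal Ar" "Ar \<ge> 0" using A unfolding IA_def
    by (cases "(\<integral>\<^sup>+x\<in>S. Gfun q f u x \<partial>lborel)") auto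
  obtain Br where Br: "IB = ennreal Br" "Br \<ge> 0" using B unfolding IB_def
    by (cases "(\<integral>\<^sup>+x\<in>S. ennreal (\<bar>u x\<bar> powr p) \<partial>lborel)") auto
  have int: "X \<le> ennreal (l powr (-q) / q * Ar + l powr p / p * Br)" if l: "l > 0" for l
  proof -
    have "X \<le> (\<integral>\<^sup>+x. (ennreal (l powr (-q) / q) * Gfun q f u x
         + ennreal (l powr p / p * \<bar>u x\<bar> powr p)) * indicator S x \<partial>lborel)"
      unfolding X_def
      by (intro nn_integral_mono mult_right_mono)
         (use young_pw[OF p q l] in \<open>auto simp: Gfun_def\<close>)
    also have "\<dots> = (\<integral>\<^sup>+x. ennreal (l powr (-q) / q) * (Gfun q f u x * indicator S x)
         + ennreal (l powr p / p) * (ennreal (\<bar>u x\<bar> powr p) * indicator S x) \<partial>lborel)"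
    proof (intro nn_integral_cong)
      fix x
      have "ennreal (l powr p / p * \<bar>u x\<bar> powr p) = ennreal (l powr p / p) * ennreal (\<bar>u x\<bar> powr p)"
        using p by (intro ennreal_mult) auto
      thus "(ennreal (l powr (-q) / q) * Gfun q f u x
         + ennreal (l powr p / p * \<bar>u x\<bar> powr p)) * indicator S x = ennreal (l powr (-q) / q) * (Gfun q f u x * indicator S x)
         + ennreal (l powr p / p) * (ennreal (\<bar>u x\<bar> powr p) * indicator S x)"
        by (simp add: distrib_right distrib_left mult_ac)
    qed
    also have "\<dots> = ennreal (l powr (-q) / q) * IA + ennreal (l powr p / p) * IB"
      unfolding IA_def IB_def
      by (simp add: nn_integral_add nn_integral_cmult)
    also have "\<dots> = ennreal (l powr (-q) / q * Ar) + ennreal (l powr p / p * Br)"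
    proof -
      have "ennreal (l powr (-q) / q * Ar) = ennreal (l powr (-q) / q) * ennreal Ar"
        using Ar q1 by (intro ennreal_mult) auto
      moreover have "ennreal (l powr p / p * Br) = ennreal (l powr p / p) * ennreal Br"
        using Br p by (intro ennreal_mult) auto
      ultimately show ?thesis using Ar Br by simp
    qed
    also have "\<dots> = ennreal (l powr (-q) / q * Ar + l powr p / p * Br)"
      using Ar Br q1 p by (intro ennreal_plus[symmetric]) auto
    finally show ?thesis .
  qed
  have Xfin: "X \<noteq> \<infinity>" using int[of 1] by (auto simp: top_unique)
  then obtain Xr where Xr: "X = ennreal Xr" "Xr \<ge> 0" by (cases X) auto
  have "Xr \<le> l powr (-q) * Ar / q + l powr p * Br / p" if "l > 0" for l
    using int[OF that] Xr Ar Br q1 p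
    by (auto simp: ennreal_le_iff2 field_simps intro!: add_nonneg_nonneg mult_nonneg_nonneg)
  hence "Xr \<le> Ar powr (1/q) * Br powr (1/p)"
    by (intro opt_young[OF p q Ar(2) Br(2)])
  hence "X \<le> ennreal (Ar powr (1/q) * Br powr (1/p))" using Xr by (simp add: ennreal_leI)
  thus ?thesis using Ar Br unfolding X_def IA_def IB_def by simp
qed

locale setting =
  fixes p q :: real and v0 v1 g a b :: "real \<Rightarrow> real"
  assumes p: "1 < p" and q: "q = p/(p-1)"
    and mv0[measurable]: "v0 \<in> borel_measurable lborel"
    and mv1[measurable]: "v1 \<in> borel_measurable lborel"
    and mg[measurable]: "g \<in> borel_measurable lborel"
    and v1nn: "\<And>x. v1 x \<ge> 0"
    and v0loc: "\<And>x y. 0<x \<Longrightarrow> x\<le>y \<Longrightarrow> Lnorm p v0 {x..y} < \<infinity>"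
    and v1inv: "loc_Lr_inv q v1"
    and ab: "ab_funcs p v0 v1 a b"
    and gfin: "Lnorm_inv q v0 g {0<..} < \<infinity>"
begin

lemma q1: "q > 1" using p unfolding q by (simp add: less_divide_eq)

lemma pq: "1/p + 1/q = 1"
proof -
  have "1/q = (p-1)/p" using p unfolding q by simp
  thus ?thesis using p by (simp add: field_simps)
qed

lemma w_nn: "0 \<le> wgt q v1 x" by (simp add: wgt_def)

lemma w_meas[measurable]: "wgt q v1 \<in> borel_measurable lborel"
  unfolding wgt_def by measurable

definition Wn :: "real \<Rightarrow> real \<Rightarrow> ennreal" where
  "Wn s t = (\<integral>\<^sup>+x\<in>{s..t}. ennreal (wgt q v1 x) \<partial>lborel)"

lemma Iw_eq: "Iw q v1 s t = enn2real (Wn s t)"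
proof -
  have "Iw q v1 s t = integral\<^sup>L lborel (\<lambda>x. indicator {s..t} x *\<^sub>R wgt q v1 x)"
    by (simp add: Iw_def set_lebesgue_integral_def)
  also have "\<dots> = enn2real (\<integral>\<^sup>+x. ennreal (indicator {s..t} x *\<^sub>R wgt q v1 x) \<partial>lborel)"
    by (rule integral_eq_nn_integral) (auto simp: w_nn)
  also have "(\<integral>\<^sup>+x. ennreal (indicator {s..t} x *\<^sub>R wgt q v1 x) \<partial>lborel) = Wn s t"
    unfolding Wn_def by (intro nn_integral_cong) (simp split: split_indicator)
  finally show ?thesis .
qed

lemma ab_parts:
  "strict_mono_on {0<..} a" "strict_mono_on {0<..} b"
  "loc_abs_cont a" "(a \<longlongrightarrow> 0) (at_right 0)" "filterlim a at_top at_top"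
  "\<And>t. t > 0 \<Longrightarrow> 0 < a t \<and> a t < t \<and> t < b t"
  "\<And>t. t > 0 \<Longrightarrow> Wn (a t) t = Wn t (b t)"
  "\<And>t. t > 0 \<Longrightarrow> Lnorm_inv q v1 (\<lambda>_. 1) {a t..b t} * Lnorm p v0 {a t..b t} = 1"
  using ab unfolding ab_funcs_def Wn_def q[symmetric] by auto

lemma a_pos: "t > 0 \<Longrightarrow> 0 < a t" and a_less: "t > 0 \<Longrightarrow> a t < t" and b_gr: "t > 0 \<Longrightarrow> t < b t"
  using ab_parts(6) by auto

lemma a_mono: "0 < x \<Longrightarrow> x \<le> y \<Longrightarrow> a x \<le> a y"
  using ab_parts(1) unfolding strict_mono_on_def
  by (metis greaterThan_iff less_eq_real_def order_less_le_trans)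

lemma b_mono: "0 < x \<Longrightarrow> x \<le> y \<Longrightarrow> b x \<le> b y"
  using ab_parts(2) unfolding strict_mono_on_def
  by (metis greaterThan_iff less_eq_real_def order_less_le_trans)

lemma a_strict: "0 < x \<Longrightarrow> x < y \<Longrightarrow> a x < a y"
  using ab_parts(1) unfolding strict_mono_on_def by auto

lemma Gfun_ge_w: "ennreal (wgt q v1 x) \<le> Gfun q (\<lambda>_. 1) v1 x"
  using v1nn[of x] by (auto simp: Gfun_def wgt_def)

lemma Gfun1_meas[measurable]: "Gfun q (\<lambda>_. 1) v1 \<in> borel_measurable lborel"
  by measurable

lemma inv_fin: assumes "0 < s" "s \<le> t" shows "(\<integral>\<^sup>+x\<in>{s..t}. Gfun q (\<lambda>_. 1) v1 x \<partial>lborel) \<noteq> \<infinity>"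
proof -
  have "Lnorm_inv q v1 (\<lambda>_. 1) {s..t} < \<infinity>" using v1inv assms unfolding loc_Lr_inv_def by auto
  thus ?thesis unfolding Lnorm_inv_Gfun enn_rt_def by (auto split: if_splits)
qed

lemma Wn_fin: "0 < s \<Longrightarrow> Wn s t \<noteq> \<infinity>"
proof (cases "s \<le> t")
  case True
  assume s: "0 < s"
  have "Wn s t \<le> (\<integral>\<^sup>+x\<in>{s..t}. Gfun q (\<lambda>_. 1) v1 x \<partial>lborel)"
    unfolding Wn_def by (intro nn_integral_mono mult_right_mono Gfun_ge_w) auto
  thus ?thesis using inv_fin[OF s True] by (auto simp: top_unique)
next
  case False
  thus ?thesis by (simp add: Wn_def)
qed

lemma AE_v1: "0 < s \<Longrightarrow> AE x in lborel. x \<in> {s..t} \<longrightarrow> v1 x \<noteq> 0"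
proof (cases "s \<le> t")
  case True
  assume s: "0 < s"
  have "AE x in lborel. Gfun q (\<lambda>_. 1) v1 x * indicator {s..t} x \<noteq> \<infinity>"
    by (rule nn_integral_PInf_AE) (use inv_fin[OF s True] in auto)
  thus ?thesis
    by (rule AE_mp) (auto simp: Gfun_def split: split_indicator)
next
  case False
  thus ?thesis by simp
qed

lemma Wn_pos: assumes s: "0 < s" and st: "s < t" shows "Wn s t > 0"
proof (rule ccontr)
  assume "\<not> Wn s t > 0"
  hence "Wn s t = 0" by simp
  hence "AE x in lborel. ennreal (wgt q v1 x) * indicator {s..t} x = 0"
    unfolding Wn_def by (subst nn_integral_0_iff_AE[symmetric]) auto
  hence "AE x in lborel. x \<notin> {s..t}"
    using AE_v1[OF s, of t]
  proof (eventually_elim)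
    case (elim x)
    show ?case
    proof
      assume x: "x \<in> {s..t}"
      hence "v1 x > 0" using elim v1nn[of x] by (simp add: order_le_less)
      hence "wgt q v1 x > 0" by (simp add: wgt_def)
      thus False using elim x by simp
    qed
  qed
  hence "emeasure lborel {s..t} = 0"
    by (subst (asm) AE_iff_measurable[of "{s..t}"]) auto
  thus False using st by simp
qed

lemma Wn_union_le: "Wn s u \<le> Wn s t + Wn t u"
proof -
  have "Wn s u \<le> (\<integral>\<^sup>+x. ennreal (wgt q v1 x) * indicator {s..t} x + ennreal (wgt q v1 x) * indicator {t..u} x \<partial>lborel)"
    unfolding Wn_def by (intro nn_integral_mono) (auto split: split_indicator)
  also have "\<dots> = Wn s t + Wn t u"
    unfolding Wn_def by (rule nn_integral_add) auto
  finally show ?thesis .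
qed

lemma Wn_split: assumes "s \<le> t" "t \<le> u" shows "Wn s u = Wn s t + Wn t u"
proof -
  have "Wn s u + 0 = Wn s u + (\<integral>\<^sup>+x. ennreal (wgt q v1 x) * indicator {t} x \<partial>lborel)"
    by simp
  also have "\<dots> = (\<integral>\<^sup>+x. ennreal (wgt q v1 x) * indicator {s..u} x + ennreal (wgt q v1 x) * indicator {t} x \<partial>lborel)"
    unfolding Wn_def by (rule nn_integral_add[symmetric]) auto
  also have "\<dots> = (\<integral>\<^sup>+x. ennreal (wgt q v1 x) * indicator {s..t} x + ennreal (wgt q v1 x) * indicator {t..u} x \<partial>lborel)"
    using assms by (intro nn_integral_cong) (auto split: split_indicator)
  also have "\<dots> = Wn s t + Wn t u"
    unfolding Wn_def by (rule nn_integral_add) auto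
  finally show ?thesis by simp
qed

lemma Wn_mono: "s' \<le> s \<Longrightarrow> t \<le> t' \<Longrightarrow> Wn s t \<le> Wn s' t'"
  unfolding Wn_def by (intro nn_integral_mono mult_left_mono) (auto split: split_indicator)

end

context setting begin

lemma V1_eq: "V1fun q v1 a b x = enn2real (Wn (a x) (b x))"
  by (simp add: V1fun_def Iw_eq)

lemma half: assumes x: "x > 0"
  shows "Wn (a x) x = ennreal (V1fun q v1 a b x / 2)" "Wn x (b x) = ennreal (V1fun q v1 a b x / 2)"
proof -
  have fin: "Wn (a x) x \<noteq> \<infinity>" using Wn_fin a_pos[OF x] by auto
  define h where "h = enn2real (Wn (a x) x)"
  have h: "Wn (a x) x = ennreal h" "h \<ge> 0" using fin unfolding h_def
    by (simp_all add: ennreal_enn2real_if)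
  have e7: "Wn x (b x) = ennreal h" using ab_parts(7)[OF x] h(1) by metis
  have "Wn (a x) (b x) = Wn (a x) x + Wn x (b x)"
    using a_less[OF x] b_gr[OF x] by (intro Wn_split) auto
  also have "\<dots> = ennreal h + ennreal h" unfolding e7 h(1) ..
  also have "\<dots> = ennreal (h + h)" using h(2) by (intro ennreal_plus[symmetric]) auto
  also have "h + h = 2*h" by simp
  finally have "enn2real (Wn (a x) (b x)) = 2*h" using h(2) by simp
  hence "V1fun q v1 a b x = 2*h" unfolding V1_eq .
  hence "ennreal h = ennreal (V1fun q v1 a b x / 2)" by simp
  thus "Wn (a x) x = ennreal (V1fun q v1 a b x / 2)" "Wn x (b x) = ennreal (V1fun q v1 a b x / 2)"
    using h(1) e7 by simp_all
qed

lemma V1_pos: assumes x: "x > 0" shows "V1fun q v1 a b x > 0"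
proof -
  have "Wn (a x) x > 0" using a_pos[OF x] a_less[OF x] by (intro Wn_pos)
  hence "ennreal (V1fun q v1 a b x / 2) > 0" using half(1)[OF x] by simp
  thus ?thesis by (simp add: ennreal_less_zero_iff)
qed

lemma V1_nn: "V1fun q v1 a b x \<ge> 0" by (simp add: V1_eq)

lemma K1: assumes x: "0 < x" and xy: "x \<le> y" and ay: "a y \<le> x"
  shows "V1fun q v1 a b x \<le> 2 * V1fun q v1 a b y"
proof -
  have y: "y > 0" using x xy by simp
  have "ennreal (V1fun q v1 a b x / 2) = Wn x (b x)" using half(2)[OF x] by simp
  also have "\<dots> \<le> Wn x y + Wn y (b x)" by (rule Wn_union_le)
  also have "\<dots> \<le> Wn (a y) y + Wn y (b y)"
    by (intro add_mono Wn_mono) (use ay b_mono[OF x xy] in auto)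
  also have "\<dots> = ennreal (V1fun q v1 a b y / 2) + ennreal (V1fun q v1 a b y / 2)"
    using half[OF y] by simp
  also have "\<dots> = ennreal (V1fun q v1 a b y)"
    using V1_nn[of y] by (subst ennreal_plus[symmetric]) auto
  finally have "V1fun q v1 a b x / 2 \<le> V1fun q v1 a b y"
    using V1_nn[of y] by (simp add: ennreal_le_iff)
  thus ?thesis by simp
qed

lemma a_cont: assumes z: "z > 0" shows "isCont a z"
proof -
  have ac: "abs_cont_on {z/2..2*z} a" using ab_parts(3) z unfolding loc_abs_cont_def by auto
  show ?thesis unfolding continuous_at_eps_delta dist_real_def
  proof (intro allI impI)
    fix e :: real assume e: "e > 0"
    from ac[unfolded abs_cont_on_def, rule_format, OF e] obtain d where d: "d > 0" and
      H: "\<And>(n::nat) l r. (\<forall>i<n. l i \<le> r i \<and> {l i..r i} \<subseteq> {z/2..2*z}) \<and>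
      (\<forall>i<n. \<forall>j<n. i \<noteq> j \<longrightarrow> r i \<le> l j \<or> r j \<le> l i) \<and>
      (\<Sum>i<n. r i - l i) < d \<Longrightarrow> (\<Sum>i<n. \<bar>a (r i) - a (l i)\<bar>) < e"
      by blast
    show "\<exists>d>0. \<forall>x'. \<bar>x' - z\<bar> < d \<longrightarrow> \<bar>a x' - a z\<bar> < e"
    proof (intro exI[of _ "min d (z/2)"] conjI allI impI)
      show "min d (z/2) > 0" using d z by simp
      fix x' assume x': "\<bar>x' - z\<bar> < min d (z/2)"
      have "(\<Sum>i<Suc 0. \<bar>a ((\<lambda>_. max x' z) i) - a ((\<lambda>_. min x' z) i)\<bar>) < e"
      proof (rule H, intro conjI allI impI)
        have xz: "\<bar>x' - z\<bar> < z/2" using x' by simp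
        have "z/2 < x'" "x' < 3*z/2" using xz unfolding abs_less_iff by linarith+
        hence "z/2 \<le> min x' z" "max x' z \<le> 2*z" using z by auto
        thus "{(\<lambda>_. min x' z) i..(\<lambda>_. max x' z) i} \<subseteq> {z/2..2*z}" for i by auto
        show "(\<lambda>_. min x' z) i \<le> (\<lambda>_. max x' z) i" for i by simp
        show "(\<Sum>i<Suc 0. (\<lambda>_. max x' z) i - (\<lambda>_. min x' z) i) < d"
        proof -
          have "\<bar>x' - z\<bar> < d" using x' by simp
          thus ?thesis by (cases "x' \<le> z") (auto simp: max_def min_def abs_less_iff)
        qed
      qed auto
      moreover have "\<bar>a (max x' z) - a (min x' z)\<bar> = \<bar>a x' - a z\<bar>"
      proof (cases "x' \<le> z")
        case True thus ?thesis by (simp add: max_def min_def abs_minus_commute[of "a z" "a x'"])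
      next
        case False thus ?thesis by (simp add: max_def min_def)
      qed
      ultimately show "\<bar>a x' - a z\<bar> < e" by simp
    qed
  qed
qed

lemma a_surj: assumes t: "t > 0" shows "t \<in> a ` {0<..}"
proof -
  have "eventually (\<lambda>s. a s < t) (at_right 0)"
    using ab_parts(4) t by (rule order_tendstoD(2))
  then obtain bb where bb: "bb > 0" "\<And>y. y > 0 \<Longrightarrow> y < bb \<Longrightarrow> a y < t"
    unfolding eventually_at_right_field by auto
  define s1 where "s1 = bb/2"
  have s1: "s1 > 0" "a s1 < t" using bb by (auto simp: s1_def)
  have "eventually (\<lambda>s. t < a s) at_top"
    using ab_parts(5) unfolding filterlim_at_top_dense by auto
  then obtain N where N: "\<And>n. n \<ge> N \<Longrightarrow> t < a n" unfolding eventually_at_top_linorder by auto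
  define s2 where "s2 = max N s1"
  have s2: "t < a s2" "s1 \<le> s2" using N by (auto simp: s2_def)
  have "continuous_on {s1..s2} a"
    by (intro continuous_at_imp_continuous_on ballI a_cont) (use s1 in auto)
  then obtain x where "s1 \<le> x" "x \<le> s2" "a x = t"
    using IVT'[of a s1 t s2] s1 s2 by auto
  thus ?thesis using s1 by force
qed

definition ainv :: "real \<Rightarrow> real" where "ainv t = inv_into {0<..} a t"

lemma ainv: assumes "t > 0" shows "ainv t > 0" "a (ainv t) = t" "t < ainv t"
proof -
  show "ainv t > 0" unfolding ainv_def using inv_into_into[OF a_surj[OF assms]] by simp
  show "a (ainv t) = t" unfolding ainv_def by (rule f_inv_into_f[OF a_surj[OF assms]])
  thus "t < ainv t" using a_less[OF \<open>ainv t > 0\<close>] by simp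
qed

end

context setting begin

definition am :: "real \<Rightarrow> real" where "am x = indicator {0<..} x *\<^sub>R a x"
definition bm :: "real \<Rightarrow> real" where "bm x = indicator {0<..} x *\<^sub>R b x"

lemma am_meas[measurable]: "am \<in> borel_measurable lborel"
proof -
  have "mono_on {0<..} a" by (intro mono_onI a_mono) auto
  hence "a \<in> borel_measurable (restrict_space borel {0<..})" by (rule borel_measurable_mono_on_fnc)
  hence "(\<lambda>x. indicator {0<..} x *\<^sub>R a x) \<in> borel_measurable borel"
    by (subst (asm) borel_measurable_restrict_space_iff) auto
  thus ?thesis unfolding am_def by simp
qed

lemma bm_meas[measurable]: "bm \<in> borel_measurable lborel"
proof -
  have "mono_on {0<..} b" by (intro mono_onI b_mono) auto
  hence "b \<in> borel_measurable (restrict_space borel {0<..})" by (rule borel_measurable_mono_on_fnc)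
  hence "(\<lambda>x. indicator {0<..} x *\<^sub>R b x) \<in> borel_measurable borel"
    by (subst (asm) borel_measurable_restrict_space_iff) auto
  thus ?thesis unfolding bm_def by simp
qed

lemma am_pos: "x > 0 \<Longrightarrow> am x = a x" and bm_pos: "x > 0 \<Longrightarrow> bm x = b x"
  by (auto simp: am_def bm_def)

definition V1m :: "real \<Rightarrow> real" where
  "V1m x = enn2real (\<integral>\<^sup>+s. (if am x \<le> s \<and> s \<le> bm x then ennreal (wgt q v1 s) else 0) \<partial>lborel)"

lemma V1m_meas[measurable]: "V1m \<in> borel_measurable lborel"
  unfolding V1m_def by measurable

lemma V1m_eq: assumes "x > 0" shows "V1m x = V1fun q v1 a b x"
proof -
  have "(\<integral>\<^sup>+s. (if am x \<le> s \<and> s \<le> bm x then ennreal (wgt q v1 s) else 0) \<partial>lborel) = Wn (a x) (b x)"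
    unfolding Wn_def using assms by (intro nn_integral_cong) (auto simp: am_pos bm_pos split: split_indicator)
  thus ?thesis by (simp add: V1m_def V1_eq)
qed

definition Rg :: "real \<Rightarrow> real \<Rightarrow> bool" where
  "Rg t x \<longleftrightarrow> 0 < t \<and> t \<le> x \<and> am x \<le> t"

definition Psi :: "real \<Rightarrow> ennreal" where
  "Psi t = (\<integral>\<^sup>+x. (if Rg t x then Gfun q g v0 x * ennreal (2 / V1m x) else 0) \<partial>lborel)"

lemma Psi_meas[measurable]: "Psi \<in> borel_measurable lborel"
  unfolding Psi_def Rg_def by measurable

definition NN :: ennreal where "NN = (\<integral>\<^sup>+x\<in>{0<..}. Gfun q g v0 x \<partial>lborel)"

lemma tonelli: "(\<integral>\<^sup>+t. ennreal (wgt q v1 t) * Psi t \<partial>lborel) = NN"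
proof -
  define F where "F t x = (if Rg t x then ennreal (wgt q v1 t) * (Gfun q g v0 x * ennreal (2 / V1m x)) else 0)" for t x
  have Fm[measurable]: "case_prod F \<in> borel_measurable (lborel \<Otimes>\<^sub>M lborel)"
    unfolding F_def Rg_def by measurable
  have "(\<integral>\<^sup>+t. ennreal (wgt q v1 t) * Psi t \<partial>lborel) = (\<integral>\<^sup>+t. (\<integral>\<^sup>+x. F t x \<partial>lborel) \<partial>lborel)"
  proof (intro nn_integral_cong)
    fix t
    have "ennreal (wgt q v1 t) * Psi t = (\<integral>\<^sup>+x. ennreal (wgt q v1 t) * (if Rg t x then Gfun q g v0 x * ennreal (2 / V1m x) else 0) \<partial>lborel)"
      unfolding Psi_def by (rule nn_integral_cmult[symmetric]) (unfold Rg_def, measurable)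
    also have "\<dots> = (\<integral>\<^sup>+x. F t x \<partial>lborel)"
      by (intro nn_integral_cong) (simp add: F_def)
    finally show "ennreal (wgt q v1 t) * Psi t = (\<integral>\<^sup>+x. F t x \<partial>lborel)" .
  qed
  also have "\<dots> = (\<integral>\<^sup>+x. (\<integral>\<^sup>+t. F t x \<partial>lborel) \<partial>lborel)"
    using lborel_pair.Fubini'[OF Fm] by simp
  also have "\<dots> = (\<integral>\<^sup>+x. Gfun q g v0 x * indicator {0<..} x \<partial>lborel)"
  proof (intro nn_integral_cong)
    fix x
    show "(\<integral>\<^sup>+t. F t x \<partial>lborel) = Gfun q g v0 x * indicator {0<..} x"
    proof (cases "x > 0")
      case False
      hence "\<And>t. F t x = 0" by (auto simp: F_def Rg_def)
      thus ?thesis using False by simp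
    next
      case True
      have "(\<integral>\<^sup>+t. F t x \<partial>lborel) = (\<integral>\<^sup>+t. (Gfun q g v0 x * ennreal (2 / V1m x)) * (ennreal (wgt q v1 t) * indicator {a x..x} t) \<partial>lborel)"
        using True a_pos[OF True]
        by (intro nn_integral_cong) (auto simp: F_def Rg_def am_pos mult_ac split: split_indicator)
      also have "\<dots> = (Gfun q g v0 x * ennreal (2 / V1m x)) * Wn (a x) x"
        unfolding Wn_def by (rule nn_integral_cmult) measurable
      also have "\<dots> = Gfun q g v0 x * (ennreal (2 / V1fun q v1 a b x) * ennreal (V1fun q v1 a b x / 2))"
        using True by (simp add: half V1m_eq mult_ac)
      also have "ennreal (2 / V1fun q v1 a b x) * ennreal (V1fun q v1 a b x / 2) = 1"
        using V1_pos[OF True] by (simp add: ennreal_mult[symmetric])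
      finally show ?thesis using True by simp
    qed
  qed
  also have "\<dots> = NN" unfolding NN_def ..
  finally show ?thesis .
qed

end

context setting begin

lemma NN_fin: "NN \<noteq> \<infinity>"
  using gfin unfolding Lnorm_inv_Gfun NN_def enn_rt_def by (auto split: if_splits)

lemma set_int_bound: "ennreal \<bar>set_lebesgue_integral lborel S f\<bar> \<le> (\<integral>\<^sup>+x\<in>S. ennreal \<bar>f x\<bar> \<partial>lborel)"
proof (cases "integrable lborel (\<lambda>x. indicator S x *\<^sub>R f x)")
  case True
  have "ennreal \<bar>set_lebesgue_integral lborel S f\<bar> = ennreal (norm (integral\<^sup>L lborel (\<lambda>x. indicator S x *\<^sub>R f x)))"
    by (simp add: set_lebesgue_integral_def)
  also have "\<dots> \<le> (\<integral>\<^sup>+x. norm (indicator S x *\<^sub>R f x) \<partial>lborel)"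
    using integral_norm_bound_ennreal[OF True] by simp
  also have "\<dots> = (\<integral>\<^sup>+x\<in>S. ennreal \<bar>f x\<bar> \<partial>lborel)"
    by (intro nn_integral_cong) (simp split: split_indicator)
  finally show ?thesis .
next
  case False
  hence "set_lebesgue_integral lborel S f = 0"
    by (simp add: set_lebesgue_integral_def not_integrable_integral_eq)
  thus ?thesis by simp
qed

lemma inv_bound: "(u::real) \<le> 2 * v \<Longrightarrow> 0 < u \<Longrightarrow> 0 < v \<Longrightarrow> 1 / v \<le> 2 / u"
proof -
  assume h: "u \<le> 2 * v" "0 < u" "0 < v"
  have "2 / (2 * v) \<le> 2 / u" by (rule divide_left_mono) (use h in auto)
  thus ?thesis by simp
qed

lemma xin: assumes t: "t > 0" and x: "x \<in> {t..ainv t}"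
  shows "x > 0" "a x \<le> t" "t \<le> x" "Rg t x"
proof -
  show "x > 0" "t \<le> x" using t x by auto
  have "a x \<le> a (ainv t)" using t x by (intro a_mono) auto
  thus "a x \<le> t" using ainv(2)[OF t] by simp
  thus "Rg t x" using t x by (auto simp: Rg_def am_pos)
qed

lemma pt_holder: assumes t: "t > 0"
  shows "(\<integral>\<^sup>+x\<in>{t..ainv t}. ennreal \<bar>g x\<bar> \<partial>lborel) \<noteq> \<infinity>"
    "ennreal (enn2real (\<integral>\<^sup>+x\<in>{t..ainv t}. ennreal \<bar>g x\<bar> \<partial>lborel) powr q) \<le> Psi t"
proof -
  define y where "y = ainv t"
  have y: "y > 0" "a y = t" "t < y" using ainv[OF t] by (auto simp: y_def)
  have yb: "y < b y" using b_gr[OF y(1)] .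
  define S where "S = (\<integral>\<^sup>+x\<in>{t..y}. ennreal \<bar>g x\<bar> \<partial>lborel)"
  define A where "A = (\<integral>\<^sup>+x\<in>{t..y}. Gfun q g v0 x \<partial>lborel)"
  define B where "B = (\<integral>\<^sup>+x\<in>{t..y}. ennreal (\<bar>v0 x\<bar> powr p) \<partial>lborel)"
  define P where "P = (\<integral>\<^sup>+x\<in>{a y..b y}. ennreal (\<bar>v0 x\<bar> powr p) \<partial>lborel)"
  define I where "I = (\<integral>\<^sup>+x\<in>{a y..b y}. Gfun q (\<lambda>_. 1) v1 x \<partial>lborel)"
  have "A \<le> NN" unfolding A_def NN_def
    using t by (intro nn_integral_mono mult_left_mono) (auto split: split_indicator)
  hence Afin: "A \<noteq> \<infinity>" using NN_fin by (auto simp: top_unique)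
  have Ifin: "I \<noteq> \<infinity>" unfolding I_def using a_pos[OF y(1)] a_less[OF y(1)] yb
    by (intro inv_fin) auto
  have "Lnorm p v0 {a y..b y} < \<infinity>" using a_pos[OF y(1)] a_less[OF y(1)] yb
    by (intro v0loc) auto
  hence Pfin: "P \<noteq> \<infinity>" unfolding Lnorm_def P_def enn_rt_def by (auto split: if_splits)
  have "B \<le> P" unfolding B_def P_def
    using y yb by (intro nn_integral_mono mult_left_mono) (auto split: split_indicator)
  hence Bfin: "B \<noteq> \<infinity>" using Pfin by (auto simp: top_unique)
  define Ar Br Pr Ir where "Ar = enn2real A" "Br = enn2real B" "Pr = enn2real P" "Ir = enn2real I"
  have Ae: "A = ennreal Ar" and Be: "B = ennreal Br" and Pe: "P = ennreal Pr" and Ie: "I = ennreal Ir"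
    using Afin Bfin Pfin Ifin by (auto simp: Ar_Br_Pr_Ir_def ennreal_enn2real_if)
  have nn: "Ar \<ge> 0" "Br \<ge> 0" "Pr \<ge> 0" "Ir \<ge> 0" by (auto simp: Ar_Br_Pr_Ir_def)
  have "Br \<le> Pr" using \<open>B \<le> P\<close> Be Pe nn by (simp add: ennreal_le_iff)
  have prod: "Lnorm_inv q v1 (\<lambda>_. 1) {a y..b y} * Lnorm p v0 {a y..b y} = 1"
    using ab_parts(8)[OF y(1)] .
  hence "ennreal (Ir powr (1/q)) * ennreal (Pr powr (1/p)) = 1"
    unfolding Lnorm_inv_Gfun Lnorm_def I_def[symmetric] P_def[symmetric] enn_rt_def
    using Ie Pe nn by simp
  hence prod1: "Ir powr (1/q) * Pr powr (1/p) = 1"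
    by (simp add: ennreal_mult[symmetric])
  have "Wn (a y) (b y) \<le> I" unfolding Wn_def I_def
    by (intro nn_integral_mono mult_right_mono Gfun_ge_w) auto
  hence "ennreal (V1fun q v1 a b y) \<le> ennreal Ir"
    using Ie Wn_fin[OF a_pos[OF y(1)]] by (simp add: V1_eq ennreal_enn2real_if)
  hence IV: "V1fun q v1 a b y \<le> Ir" using nn by (simp add: ennreal_le_iff)
  have V1y: "V1fun q v1 a b y > 0" using V1_pos[OF y(1)] .
  have q0: "q > 0" using q1 by simp
  have "V1fun q v1 a b y powr (1/q) \<le> Ir powr (1/q)" using IV V1y q0 by (intro powr_mono2) auto
  hence "Pr powr (1/p) \<le> 1 / V1fun q v1 a b y powr (1/q)"
  proof -
    assume h: "V1fun q v1 a b y powr (1/q) \<le> Ir powr (1/q)"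
    have pos: "V1fun q v1 a b y powr (1/q) > 0" using V1y by simp
    have Ipos: "Ir powr (1/q) > 0" using pos h by linarith
    have "Pr powr (1/p) = 1 / Ir powr (1/q)" using prod1 Ipos by (simp add: eq_divide_eq mult.commute)
    also have "\<dots> \<le> 1 / V1fun q v1 a b y powr (1/q)" using h pos Ipos by (intro divide_left_mono) auto
    finally show ?thesis .
  qed
  have Hol: "S \<le> ennreal (Ar powr (1/q) * Br powr (1/p))"
    unfolding S_def Ar_Br_Pr_Ir_def A_def B_def
    by (rule holder_set[OF p q mg mv0]) (use Afin Bfin in \<open>auto simp: A_def B_def\<close>)
  hence Sfin: "S \<noteq> \<infinity>" by (auto simp: top_unique)
  thus "(\<integral>\<^sup>+x\<in>{t..ainv t}. ennreal \<bar>g x\<bar> \<partial>lborel) \<noteq> \<infinity>" unfolding S_def y_def .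
  define Sr where "Sr = enn2real S"
  have Se: "S = ennreal Sr" and Sr0: "Sr \<ge> 0" using Sfin by (auto simp: Sr_def ennreal_enn2real_if)
  have "Sr \<le> Ar powr (1/q) * Br powr (1/p)" using Hol Se nn by (simp add: ennreal_le_iff)
  also have "\<dots> \<le> Ar powr (1/q) * Pr powr (1/p)"
    using \<open>Br \<le> Pr\<close> nn p by (intro mult_left_mono powr_mono2) auto
  also have "\<dots> \<le> Ar powr (1/q) * (1 / V1fun q v1 a b y powr (1/q))"
    using \<open>Pr powr (1/p) \<le> 1 / V1fun q v1 a b y powr (1/q)\<close> by (intro mult_left_mono) auto
  also have "\<dots> = (Ar / V1fun q v1 a b y) powr (1/q)"
    using nn V1y by (simp add: powr_divide)
  finally have "Sr powr q \<le> ((Ar / V1fun q v1 a b y) powr (1/q)) powr q"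
    using Sr0 q0 by (intro powr_mono2) auto
  also have "\<dots> = Ar / V1fun q v1 a b y" using nn V1y q0 by (simp add: powr_powr)
  finally have SA: "Sr powr q \<le> Ar / V1fun q v1 a b y" .
  have "ennreal (Sr powr q) \<le> ennreal (Ar * (1 / V1fun q v1 a b y))"
    using SA by (intro ennreal_leI) simp
  also have "\<dots> = A * ennreal (1 / V1fun q v1 a b y)"
    using Ae nn V1y by (subst ennreal_mult) auto
  also have "\<dots> = (\<integral>\<^sup>+x. Gfun q g v0 x * indicator {t..y} x * ennreal (1 / V1fun q v1 a b y) \<partial>lborel)"
    unfolding A_def by (rule nn_integral_multc[symmetric]) measurable
  also have "\<dots> \<le> Psi t"
    unfolding Psi_def
  proof (intro nn_integral_mono)
    fix x
    show "Gfun q g v0 x * indicator {t..y} x * ennreal (1 / V1fun q v1 a b y)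
      \<le> (if Rg t x then Gfun q g v0 x * ennreal (2 / V1m x) else 0)"
    proof (cases "x \<in> {t..y}")
      case True
      have xt: "x \<in> {t..ainv t}" using True unfolding y_def .
      note x = xin[OF t xt]
      have "V1fun q v1 a b x \<le> 2 * V1fun q v1 a b y"
        using True y(2) x by (intro K1) auto
      hence "1 / V1fun q v1 a b y \<le> 2 / V1fun q v1 a b x"
        using V1_pos[OF x(1)] V1y by (rule inv_bound)
      hence "ennreal (1 / V1fun q v1 a b y) \<le> ennreal (2 / V1m x)"
        unfolding V1m_eq[OF x(1)] by (rule ennreal_leI)
      hence "Gfun q g v0 x * ennreal (1 / V1fun q v1 a b y) \<le> Gfun q g v0 x * ennreal (2 / V1m x)"
        by (rule mult_left_mono) simp
      moreover have "indicator {t..y} x = (1::ennreal)" using True by (simp add: indicator_def)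
      ultimately show ?thesis by (simp only: x(4) if_True mult_1_right)
    next
      case False
      hence "indicator {t..y} x = (0::ennreal)" by (simp add: indicator_def)
      thus ?thesis by (simp only: mult_zero_right mult_zero_left zero_le)
    qed
  qed
  finally show "ennreal (enn2real (\<integral>\<^sup>+x\<in>{t..ainv t}. ennreal \<bar>g x\<bar> \<partial>lborel) powr q) \<le> Psi t"
    unfolding Sr_def S_def y_def .
qed

end

lemma real_b1: "0 \<le> (c::real) \<Longrightarrow> c \<le> v/2 \<Longrightarrow> 0 < v \<Longrightarrow> \<bar>gg / v * c\<bar> \<le> 1/2 * \<bar>gg\<bar>"
proof -
  assume h: "0 \<le> c" "c \<le> v/2" "0 < v"
  have "\<bar>gg / v * c\<bar> = \<bar>gg\<bar> * (c / v)" using h by (simp add: abs_mult)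
  also have "c / v \<le> 1/2" using h by (simp add: divide_le_eq)
  hence "\<bar>gg\<bar> * (c / v) \<le> \<bar>gg\<bar> * (1/2)" by (intro mult_left_mono) auto
  finally show ?thesis by simp
qed

lemma real_b2: "0 < (vt::real) \<Longrightarrow> vt \<le> 2 * vx \<Longrightarrow> \<bar>gg / vx\<bar> \<le> 2 / vt * \<bar>gg\<bar>"
proof -
  assume h: "0 < vt" "vt \<le> 2 * vx"
  have vx: "vx > 0" using h by simp
  have "2 / (2 * vx) \<le> 2 / vt" by (rule divide_left_mono) (use h vx in auto)
  hence "1 / vx \<le> 2 / vt" by simp
  hence "\<bar>gg\<bar> * (1 / vx) \<le> \<bar>gg\<bar> * (2 / vt)" by (intro mult_left_mono) auto
  thus ?thesis using vx by (simp add: abs_divide mult.commute)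
qed

lemma enn_rt_bound:
  assumes r: "0 < r" and c: "0 \<le> c" and X: "X \<le> ennreal (c powr r) * N" and N: "N \<noteq> \<infinity>"
  shows "enn_rt r X \<le> ennreal (c * enn2real N powr (1/r))"
proof -
  define n where "n = enn2real N"
  have Ne: "N = ennreal n" "n \<ge> 0" using N by (auto simp: n_def ennreal_enn2real_if)
  have "X \<le> ennreal (c powr r * n)" using X Ne by (simp add: ennreal_mult)
  hence Xf: "X \<noteq> \<infinity>" by (auto simp: top_unique)
  define x where "x = enn2real X"
  have Xe: "X = ennreal x" "x \<ge> 0" using Xf by (auto simp: x_def ennreal_enn2real_if)
  have "x \<le> c powr r * n" using \<open>X \<le> ennreal (c powr r * n)\<close> Xe Ne by (simp add: ennreal_le_iff)
  hence "x powr (1/r) \<le> (c powr r * n) powr (1/r)" using Xe r by (intro powr_mono2) auto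
  also have "\<dots> = c * n powr (1/r)" using c Ne r by (simp add: powr_mult powr_powr)
  finally have "x powr (1/r) \<le> c * n powr (1/r)" .
  thus ?thesis unfolding enn_rt_def using Xe Xf by (simp add: n_def ennreal_leI)
qed

context setting begin

definition SS :: "real \<Rightarrow> real" where
  "SS t = enn2real (\<integral>\<^sup>+x\<in>{t..ainv t}. ennreal \<bar>g x\<bar> \<partial>lborel)"

lemma SS_eq: "t > 0 \<Longrightarrow> (\<integral>\<^sup>+x\<in>{t..ainv t}. ennreal \<bar>g x\<bar> \<partial>lborel) = ennreal (SS t)"
  using pt_holder(1) by (simp add: SS_def ennreal_enn2real_if)

lemma SS_nn: "SS t \<ge> 0" by (simp add: SS_def)

lemma I1_bound: assumes t: "t > 0"
  shows "\<bar>\<integral>x\<in>{t..ainv t}. g x / V1fun q v1 a b x * Iw q v1 (a x) t \<partial>lborel\<bar> \<le> SS t / 2"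
proof -
  have "ennreal \<bar>\<integral>x\<in>{t..ainv t}. g x / V1fun q v1 a b x * Iw q v1 (a x) t \<partial>lborel\<bar>
      \<le> (\<integral>\<^sup>+x\<in>{t..ainv t}. ennreal \<bar>g x / V1fun q v1 a b x * Iw q v1 (a x) t\<bar> \<partial>lborel)"
    by (rule set_int_bound)
  also have "\<dots> \<le> (\<integral>\<^sup>+x. ennreal (1/2) * (ennreal \<bar>g x\<bar> * indicator {t..ainv t} x) \<partial>lborel)"
  proof (intro nn_integral_mono)
    fix x
    show "ennreal \<bar>g x / V1fun q v1 a b x * Iw q v1 (a x) t\<bar> * indicator {t..ainv t} x
        \<le> ennreal (1/2) * (ennreal \<bar>g x\<bar> * indicator {t..ainv t} x)"
    proof (cases "x \<in> {t..ainv t}")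
      case True
      note x = xin[OF t True]
      have f1: "Wn (a x) x \<noteq> \<infinity>" using Wn_fin a_pos[OF x(1)] by auto
      have "Iw q v1 (a x) t = enn2real (Wn (a x) t)" by (rule Iw_eq)
      also have "\<dots> \<le> enn2real (Wn (a x) x)"
        using f1 x by (intro enn2real_mono Wn_mono) (auto simp: top.not_eq_extremum)
      also have "\<dots> = V1fun q v1 a b x / 2" using half(1)[OF x(1)] V1_nn[of x] by simp
      finally have c: "Iw q v1 (a x) t \<le> V1fun q v1 a b x / 2" .
      have c0: "Iw q v1 (a x) t \<ge> 0" by (simp add: Iw_eq)
      have "\<bar>g x / V1fun q v1 a b x * Iw q v1 (a x) t\<bar> \<le> 1/2 * \<bar>g x\<bar>"
        by (rule real_b1[OF c0 c V1_pos[OF x(1)]])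
      hence l1: "ennreal \<bar>g x / V1fun q v1 a b x * Iw q v1 (a x) t\<bar> \<le> ennreal (1/2 * \<bar>g x\<bar>)"
        by (rule ennreal_leI)
      have "ennreal (1/2 * \<bar>g x\<bar>) = ennreal (1/2) * ennreal \<bar>g x\<bar>" by (rule ennreal_mult) auto
      hence "ennreal \<bar>g x / V1fun q v1 a b x * Iw q v1 (a x) t\<bar> \<le> ennreal (1/2) * ennreal \<bar>g x\<bar>"
        using l1 by simp
      moreover have "indicator {t..ainv t} x = (1::ennreal)" using True by (simp add: indicator_def)
      ultimately show ?thesis by (simp only: mult_1_right)
    next
      case False
      hence "indicator {t..ainv t} x = (0::ennreal)" by (simp add: indicator_def)
      thus ?thesis by (simp only: mult_zero_right mult_zero_left zero_le)
    qed
  qed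
  also have "\<dots> = ennreal (1/2) * ennreal (SS t)"
    using SS_eq[OF t] by (subst nn_integral_cmult) auto
  also have "\<dots> = ennreal (1/2 * SS t)" by (rule ennreal_mult[symmetric]) (auto simp: SS_nn)
  finally show ?thesis using SS_nn[of t] by (simp add: ennreal_le_iff)
qed

lemma I2_bound: assumes t: "t > 0"
  shows "V1fun q v1 a b t * \<bar>\<integral>x\<in>{t..ainv t}. g x / V1fun q v1 a b x \<partial>lborel\<bar> \<le> 2 * SS t"
proof -
  have Vt: "V1fun q v1 a b t > 0" using V1_pos[OF t] .
  have "ennreal \<bar>\<integral>x\<in>{t..ainv t}. g x / V1fun q v1 a b x \<partial>lborel\<bar>
      \<le> (\<integral>\<^sup>+x\<in>{t..ainv t}. ennreal \<bar>g x / V1fun q v1 a b x\<bar> \<partial>lborel)"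
    by (rule set_int_bound)
  also have "\<dots> \<le> (\<integral>\<^sup>+x. ennreal (2 / V1fun q v1 a b t) * (ennreal \<bar>g x\<bar> * indicator {t..ainv t} x) \<partial>lborel)"
  proof (intro nn_integral_mono)
    fix x
    show "ennreal \<bar>g x / V1fun q v1 a b x\<bar> * indicator {t..ainv t} x
        \<le> ennreal (2 / V1fun q v1 a b t) * (ennreal \<bar>g x\<bar> * indicator {t..ainv t} x)"
    proof (cases "x \<in> {t..ainv t}")
      case True
      note x = xin[OF t True]
      have "V1fun q v1 a b t \<le> 2 * V1fun q v1 a b x" using t x by (intro K1) auto
      hence "\<bar>g x / V1fun q v1 a b x\<bar> \<le> 2 / V1fun q v1 a b t * \<bar>g x\<bar>"
        by (rule real_b2[OF Vt])
      hence l1: "ennreal \<bar>g x / V1fun q v1 a b x\<bar> \<le> ennreal (2 / V1fun q v1 a b t * \<bar>g x\<bar>)"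
        by (rule ennreal_leI)
      have "ennreal (2 / V1fun q v1 a b t * \<bar>g x\<bar>) = ennreal (2 / V1fun q v1 a b t) * ennreal \<bar>g x\<bar>"
        using Vt by (intro ennreal_mult) auto
      hence "ennreal \<bar>g x / V1fun q v1 a b x\<bar> \<le> ennreal (2 / V1fun q v1 a b t) * ennreal \<bar>g x\<bar>"
        using l1 by simp
      moreover have "indicator {t..ainv t} x = (1::ennreal)" using True by (simp add: indicator_def)
      ultimately show ?thesis by (simp only: mult_1_right)
    next
      case False
      hence "indicator {t..ainv t} x = (0::ennreal)" by (simp add: indicator_def)
      thus ?thesis by (simp only: mult_zero_right mult_zero_left zero_le)
    qed
  qed
  also have "\<dots> = ennreal (2 / V1fun q v1 a b t) * ennreal (SS t)"
    using SS_eq[OF t] by (subst nn_integral_cmult) auto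
  also have "\<dots> = ennreal (2 / V1fun q v1 a b t * SS t)" by (rule ennreal_mult[symmetric]) (use Vt in \<open>auto simp: SS_nn\<close>)
  finally have "\<bar>\<integral>x\<in>{t..ainv t}. g x / V1fun q v1 a b x \<partial>lborel\<bar> \<le> 2 / V1fun q v1 a b t * SS t"
    using SS_nn[of t] Vt by (simp add: ennreal_le_iff)
  hence "V1fun q v1 a b t * \<bar>\<integral>x\<in>{t..ainv t}. g x / V1fun q v1 a b x \<partial>lborel\<bar>
     \<le> V1fun q v1 a b t * (2 / V1fun q v1 a b t * SS t)" using Vt by (intro mult_left_mono) auto
  also have "\<dots> = 2 * SS t" using Vt by simp
  finally show ?thesis .
qed

end

context setting begin

lemma int_bound:
  assumes c: "0 \<le> c" and F: "\<And>t. t > 0 \<Longrightarrow> F t \<le> c powr q * (wgt q v1 t * SS t powr q)"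
  shows "(\<integral>\<^sup>+t\<in>{0<..}. ennreal (F t) \<partial>lborel) \<le> ennreal (c powr q) * NN"
proof -
  have "(\<integral>\<^sup>+t\<in>{0<..}. ennreal (F t) \<partial>lborel) \<le> (\<integral>\<^sup>+t. ennreal (c powr q) * (ennreal (wgt q v1 t) * Psi t) \<partial>lborel)"
  proof (intro nn_integral_mono)
    fix t
    show "ennreal (F t) * indicator {0<..} t \<le> ennreal (c powr q) * (ennreal (wgt q v1 t) * Psi t)"
    proof (cases "t > 0")
      case True
      have "ennreal (F t) \<le> ennreal (c powr q * (wgt q v1 t * SS t powr q))"
        by (rule ennreal_leI[OF F[OF True]])
      also have "\<dots> = ennreal (c powr q) * (ennreal (wgt q v1 t) * ennreal (SS t powr q))"
        by (simp add: ennreal_mult w_nn)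
      also have "\<dots> \<le> ennreal (c powr q) * (ennreal (wgt q v1 t) * Psi t)"
        using pt_holder(2)[OF True] unfolding SS_def[symmetric]
        by (intro mult_left_mono) auto
      finally have "ennreal (F t) \<le> ennreal (c powr q) * (ennreal (wgt q v1 t) * Psi t)" .
      moreover have "indicator {0<..} t = (1::ennreal)" using True by (simp add: indicator_def)
      ultimately show ?thesis by (simp only: mult_1_right)
    next
      case False
      hence "indicator {0<..} t = (0::ennreal)" by (simp add: indicator_def)
      thus ?thesis by (simp only: mult_zero_right mult_zero_left zero_le)
    qed
  qed
  also have "\<dots> = ennreal (c powr q) * (\<integral>\<^sup>+t. ennreal (wgt q v1 t) * Psi t \<partial>lborel)"
    by (rule nn_integral_cmult) measurable
  also have "\<dots> = ennreal (c powr q) * NN" by (simp only: tonelli)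
  finally show ?thesis .
qed

lemma GG_bound: "GG q v1 a b g \<le> ennreal (1/2 * enn2real NN powr (1/q))"
proof -
  have q0: "q > 0" using q1 by simp
  have X: "(\<integral>\<^sup>+t\<in>{0<..}. ennreal (wgt q v1 t *
      \<bar>\<integral>x\<in>{t..ainv t}. g x / V1fun q v1 a b x * Iw q v1 (a x) t \<partial>lborel\<bar> powr q) \<partial>lborel)
      \<le> ennreal ((1/2) powr q) * NN"
  proof (rule int_bound)
    fix t :: real assume t: "t > 0"
    let ?I = "\<bar>\<integral>x\<in>{t..ainv t}. g x / V1fun q v1 a b x * Iw q v1 (a x) t \<partial>lborel\<bar>"
    have "?I \<le> 1/2 * SS t" using I1_bound[OF t] by simp
    hence "?I powr q \<le> (1/2 * SS t) powr q" using q0 by (intro powr_mono2) auto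
    also have "\<dots> = (1/2) powr q * SS t powr q" by (rule powr_mult)
    finally have "?I powr q \<le> (1/2) powr q * SS t powr q" .
    hence "wgt q v1 t * ?I powr q \<le> wgt q v1 t * ((1/2) powr q * SS t powr q)"
      by (intro mult_left_mono) (auto simp: w_nn)
    thus "wgt q v1 t * ?I powr q \<le> (1/2) powr q * (wgt q v1 t * SS t powr q)" by (simp add: mult_ac)
  qed simp
  have "enn_rt q (\<integral>\<^sup>+t\<in>{0<..}. ennreal (wgt q v1 t *
      \<bar>\<integral>x\<in>{t..ainv t}. g x / V1fun q v1 a b x * Iw q v1 (a x) t \<partial>lborel\<bar> powr q) \<partial>lborel)
      \<le> ennreal (1/2 * enn2real NN powr (1/q))"
    using enn_rt_bound[OF q0 _ X NN_fin] by simp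
  thus ?thesis unfolding GG_def ainv_def[symmetric] .
qed

lemma GGc_bound: "GGc q v1 a b g \<le> ennreal (2 * enn2real NN powr (1/q))"
proof -
  have q0: "q > 0" using q1 by simp
  have X: "(\<integral>\<^sup>+t\<in>{0<..}. ennreal (wgt q v1 t * V1fun q v1 a b t powr q *
      \<bar>\<integral>x\<in>{t..ainv t}. g x / V1fun q v1 a b x \<partial>lborel\<bar> powr q) \<partial>lborel)
      \<le> ennreal (2 powr q) * NN"
  proof (rule int_bound)
    fix t :: real assume t: "t > 0"
    let ?I = "\<bar>\<integral>x\<in>{t..ainv t}. g x / V1fun q v1 a b x \<partial>lborel\<bar>"
    have "V1fun q v1 a b t powr q * ?I powr q = (V1fun q v1 a b t * ?I) powr q"
      using V1_nn[of t] by (simp add: powr_mult)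
    also have "\<dots> \<le> (2 * SS t) powr q" using I2_bound[OF t] q0 V1_nn[of t]
      by (intro powr_mono2) auto
    also have "\<dots> = 2 powr q * SS t powr q" using SS_nn[of t] by (simp add: powr_mult)
    finally have "V1fun q v1 a b t powr q * ?I powr q \<le> 2 powr q * SS t powr q" .
    hence "wgt q v1 t * (V1fun q v1 a b t powr q * ?I powr q) \<le> wgt q v1 t * (2 powr q * SS t powr q)"
      by (intro mult_left_mono) (auto simp: w_nn)
    thus "wgt q v1 t * V1fun q v1 a b t powr q * ?I powr q \<le> 2 powr q * (wgt q v1 t * SS t powr q)"
      by (simp add: mult_ac)
  qed simp
  have "enn_rt q (\<integral>\<^sup>+t\<in>{0<..}. ennreal (wgt q v1 t * V1fun q v1 a b t powr q *
      \<bar>\<integral>x\<in>{t..ainv t}. g x / V1fun q v1 a b x \<partial>lborel\<bar> powr q) \<partial>lborel)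
      \<le> ennreal (2 * enn2real NN powr (1/q))"
    using enn_rt_bound[OF q0 _ X NN_fin] by simp
  thus ?thesis unfolding GGc_def ainv_def[symmetric] .
qed

lemma main_loc: "GG q v1 a b g + GGc q v1 a b g \<le> ennreal 3 * Lnorm_inv q v0 g {0<..}"
proof -
  define m where "m = enn2real NN powr (1/q)"
  have m0: "m \<ge> 0" by (simp add: m_def)
  have L: "Lnorm_inv q v0 g {0<..} = ennreal m"
    unfolding Lnorm_inv_Gfun NN_def[symmetric] enn_rt_def m_def using NN_fin by simp
  have "GG q v1 a b g + GGc q v1 a b g \<le> ennreal (1/2 * m) + ennreal (2 * m)"
    using GG_bound GGc_bound unfolding m_def by (rule add_mono)
  also have "\<dots> = ennreal (1/2 * m + 2 * m)" by (rule ennreal_plus[symmetric]) (auto simp: m0)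
  also have "\<dots> \<le> ennreal (3 * m)" using m0 by (intro ennreal_leI) simp
  also have "\<dots> = ennreal 3 * ennreal m" by (rule ennreal_mult) (auto simp: m0)
  finally show ?thesis unfolding L .
qed

lemma loc_g: assumes "0 < x" "x \<le> y" shows "Lnorm 1 g {x..y} < \<infinity>"
proof -
  have "(\<integral>\<^sup>+s\<in>{x..y}. Gfun q g v0 s \<partial>lborel) \<le> NN" unfolding NN_def
    using assms by (intro nn_integral_mono mult_left_mono) (auto split: split_indicator)
  hence A: "(\<integral>\<^sup>+s\<in>{x..y}. Gfun q g v0 s \<partial>lborel) \<noteq> \<infinity>" using NN_fin by (auto simp: top_unique)
  have "Lnorm p v0 {x..y} < \<infinity>" by (rule v0loc[OF assms])
  hence B: "(\<integral>\<^sup>+s\<in>{x..y}. ennreal (\<bar>v0 s\<bar> powr p) \<partial>lborel) \<noteq> \<infinity>"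
    unfolding Lnorm_def enn_rt_def by (auto split: if_splits)
  have "(\<integral>\<^sup>+s\<in>{x..y}. ennreal \<bar>g s\<bar> \<partial>lborel) \<le>
     ennreal (enn2real (\<integral>\<^sup>+s\<in>{x..y}. Gfun q g v0 s \<partial>lborel) powr (1/q) *
              enn2real (\<integral>\<^sup>+s\<in>{x..y}. ennreal (\<bar>v0 s\<bar> powr p) \<partial>lborel) powr (1/p))"
    by (rule holder_set[OF p q mg mv0 _ A B]) simp
  hence fin: "(\<integral>\<^sup>+s\<in>{x..y}. ennreal \<bar>g s\<bar> \<partial>lborel) \<noteq> \<infinity>" by (auto simp: top_unique)
  show ?thesis unfolding Lnorm_def enn_rt_def using fin by simp
qed

end

lemma setnn_cong0:
  assumes "S \<subseteq> {0<..}" "\<And>x. 0 < x \<Longrightarrow> F x = F' x"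
  shows "set_nn_integral lborel S F = set_nn_integral lborel S F'"
  using assms by (intro nn_integral_cong) (auto split: split_indicator)

lemma Lnorm_cong0:
  assumes "S \<subseteq> {0<..}" "\<And>x. 0 < x \<Longrightarrow> f x = f' x"
  shows "Lnorm r f S = Lnorm r f' S"
proof -
  have "set_nn_integral lborel S (\<lambda>x. ennreal (\<bar>f x\<bar> powr r)) = set_nn_integral lborel S (\<lambda>x. ennreal (\<bar>f' x\<bar> powr r))"
    by (rule setnn_cong0[OF assms(1)]) (simp add: assms(2))
  thus ?thesis unfolding Lnorm_def by simp
qed

lemma Lnorm_inv_cong0:
  assumes "S \<subseteq> {0<..}" "\<And>x. 0 < x \<Longrightarrow> v x = v' x" "\<And>x. 0 < x \<Longrightarrow> h x = h' x"
  shows "Lnorm_inv r v h S = Lnorm_inv r v' h' S"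
  unfolding Lnorm_inv_Gfun using assms
  by (intro arg_cong[where f="enn_rt r"] setnn_cong0) (auto simp: Gfun_def)

lemma wgt_cong0: "(\<And>x. 0 < x \<Longrightarrow> v x = v' x) \<Longrightarrow> 0 < x \<Longrightarrow> wgt q v x = wgt q v' x"
  by (simp add: wgt_def)

lemma Iw_cong0:
  assumes "\<And>x. 0 < x \<Longrightarrow> v x = v' x" "0 < s"
  shows "Iw q v s t = Iw q v' s t"
  unfolding Iw_def set_lebesgue_integral_def
  using assms by (intro Bochner_Integration.integral_cong) (auto simp: wgt_def split: split_indicator)

lemma V1fun_cong0:
  assumes "\<And>x. 0 < x \<Longrightarrow> v x = v' x" "0 < a x"
  shows "V1fun q v a b x = V1fun q v' a b x"
  unfolding V1fun_def using assms by (rule Iw_cong0)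

lemma GG_cong0:
  assumes v: "\<And>x. 0 < x \<Longrightarrow> v x = v' x" and gg: "\<And>x. 0 < x \<Longrightarrow> g x = g' x"
    and apos: "\<And>x. 0 < x \<Longrightarrow> 0 < a x"
  shows "GG q v a b g = GG q v' a b g'" "GGc q v a b g = GGc q v' a b g'"
proof -
  have V1e: "V1fun q v a b x = V1fun q v' a b x" if "0 < x" for x
    by (rule V1fun_cong0[where a=a and x=x, OF v apos[OF that]])
  have Iwe: "Iw q v (a x) t = Iw q v' (a x) t" if "0 < x" for x t
    by (rule Iw_cong0[OF v apos[OF that]])
  have we: "wgt q v x = wgt q v' x" if "0 < x" for x
    by (rule wgt_cong0[OF v that])
  have inner1: "(\<integral>x\<in>{t..inv_into {0<..} a t}. g x / V1fun q v a b x * Iw q v (a x) t \<partial>lborel)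
     = (\<integral>x\<in>{t..inv_into {0<..} a t}. g' x / V1fun q v' a b x * Iw q v' (a x) t \<partial>lborel)"
    if t: "t > 0" for t
    unfolding set_lebesgue_integral_def
  proof (rule Bochner_Integration.integral_cong[OF refl])
    fix x
    show "indicator {t..inv_into {0<..} a t} x *\<^sub>R (g x / V1fun q v a b x * Iw q v (a x) t)
        = indicator {t..inv_into {0<..} a t} x *\<^sub>R (g' x / V1fun q v' a b x * Iw q v' (a x) t)"
    proof (cases "x \<in> {t..inv_into {0<..} a t}")
      case True
      hence x0: "0 < x" using t by auto
      show ?thesis by (simp only: gg[OF x0] V1e[OF x0] Iwe[OF x0])
    qed simp
  qed
  have inner2: "(\<integral>x\<in>{t..inv_into {0<..} a t}. g x / V1fun q v a b x \<partial>lborel)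
     = (\<integral>x\<in>{t..inv_into {0<..} a t}. g' x / V1fun q v' a b x \<partial>lborel)"
    if t: "t > 0" for t
    unfolding set_lebesgue_integral_def
  proof (rule Bochner_Integration.integral_cong[OF refl])
    fix x
    show "indicator {t..inv_into {0<..} a t} x *\<^sub>R (g x / V1fun q v a b x)
        = indicator {t..inv_into {0<..} a t} x *\<^sub>R (g' x / V1fun q v' a b x)"
    proof (cases "x \<in> {t..inv_into {0<..} a t}")
      case True
      hence x0: "0 < x" using t by auto
      show ?thesis by (simp only: gg[OF x0] V1e[OF x0])
    qed simp
  qed
  show "GG q v a b g = GG q v' a b g'"
    unfolding GG_def
  proof (rule arg_cong[where f="enn_rt q"], rule setnn_cong0)
    fix t :: real assume t: "0 < t"
    show "ennreal (wgt q v t * \<bar>\<integral>x\<in>{t..inv_into {0<..} a t}. g x / V1fun q v a b x * Iw q v (a x) t \<partial>lborel\<bar> powr q)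
       = ennreal (wgt q v' t * \<bar>\<integral>x\<in>{t..inv_into {0<..} a t}. g' x / V1fun q v' a b x * Iw q v' (a x) t \<partial>lborel\<bar> powr q)"
      by (simp only: inner1[OF t] we[OF t])
  qed auto
  show "GGc q v a b g = GGc q v' a b g'"
    unfolding GGc_def
  proof (rule arg_cong[where f="enn_rt q"], rule setnn_cong0)
    fix t :: real assume t: "0 < t"
    show "ennreal (wgt q v t * V1fun q v a b t powr q * \<bar>\<integral>x\<in>{t..inv_into {0<..} a t}. g x / V1fun q v a b x \<partial>lborel\<bar> powr q)
       = ennreal (wgt q v' t * V1fun q v' a b t powr q * \<bar>\<integral>x\<in>{t..inv_into {0<..} a t}. g' x / V1fun q v' a b x \<partial>lborel\<bar> powr q)"
      by (simp only: inner2[OF t] we[OF t] V1e[OF t])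
  qed auto
qed

lemma ab_cong0:
  assumes ab: "ab_funcs p v0 v1 a b"
    and v0: "\<And>x. 0 < x \<Longrightarrow> v0 x = v0' x" and v1: "\<And>x. 0 < x \<Longrightarrow> v1 x = v1' x"
  shows "ab_funcs p v0' v1' a b"
proof -
  have apos: "\<And>t. t > 0 \<Longrightarrow> 0 < a t" and bt: "\<And>t. t > 0 \<Longrightarrow> t < b t"
    using ab unfolding ab_funcs_def by auto
  have sub1: "\<And>t. t > 0 \<Longrightarrow> {a t..t} \<subseteq> {0<..}" "\<And>t. t > 0 \<Longrightarrow> {t..b t} \<subseteq> {0<..}"
    "\<And>t. t > 0 \<Longrightarrow> {a t..b t} \<subseteq> {0<..}"
    using apos by force+
  have e1: "\<And>t. t > 0 \<Longrightarrow> (\<integral>\<^sup>+x\<in>{a t..t}. ennreal (wgt (p/(p-1)) v1 x) \<partial>lborel)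
       = (\<integral>\<^sup>+x\<in>{a t..t}. ennreal (wgt (p/(p-1)) v1' x) \<partial>lborel)"
    by (rule setnn_cong0[OF sub1(1)]) (auto simp: wgt_cong0[OF v1])
  have e2: "\<And>t. t > 0 \<Longrightarrow> (\<integral>\<^sup>+x\<in>{t..b t}. ennreal (wgt (p/(p-1)) v1 x) \<partial>lborel)
       = (\<integral>\<^sup>+x\<in>{t..b t}. ennreal (wgt (p/(p-1)) v1' x) \<partial>lborel)"
    by (rule setnn_cong0[OF sub1(2)]) (auto simp: wgt_cong0[OF v1])
  have e3: "\<And>t. t > 0 \<Longrightarrow> Lnorm_inv (p/(p-1)) v1 (\<lambda>_. 1) {a t..b t} = Lnorm_inv (p/(p-1)) v1' (\<lambda>_. 1) {a t..b t}"
    by (rule Lnorm_inv_cong0[OF sub1(3)]) (auto simp: v1)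
  have e4: "\<And>t. t > 0 \<Longrightarrow> Lnorm p v0 {a t..b t} = Lnorm p v0' {a t..b t}"
    by (rule Lnorm_cong0[OF sub1(3)]) (auto simp: v0)
  show ?thesis using ab unfolding ab_funcs_def by (simp add: e1 e2 e3 e4)
qed

theorem lemma3p1:
  fixes p :: real
  assumes "1 < p"
  shows "\<exists>C>0. \<forall>v0 v1 a b c g.
    weight_class p v0 \<and> weight_class p v1 \<and> loc_Lr_inv (p/(p-1)) v1 \<and>
    0 < c \<and>
    Lnorm_inv (p/(p-1)) v1 (\<lambda>_. 1) {0<..<c} * Lnorm p v0 {0<..<c} = \<infinity> \<and>
    Lnorm_inv (p/(p-1)) v1 (\<lambda>_. 1) {c<..} * Lnorm p v0 {c<..} = \<infinity> \<and>
    ab_funcs p v0 v1 a b \<and>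
    set_borel_measurable lborel {0<..} g \<and> Lnorm_inv (p/(p-1)) v0 g {0<..} < \<infinity>
    \<longrightarrow> in_W (p/(p-1)) v1 a b g \<and>
        GG (p/(p-1)) v1 a b g + GGc (p/(p-1)) v1 a b g
          \<le> ennreal C * Lnorm_inv (p/(p-1)) v0 g {0<..}"
proof (intro exI[of _ 3] conjI allI impI)
  show "(0::real) < 3" by simp
  fix v0 v1 a b g :: "real \<Rightarrow> real" and c :: real
  define q where "q = p/(p-1)"
  assume H: "weight_class p v0 \<and> weight_class p v1 \<and> loc_Lr_inv (p/(p-1)) v1 \<and>
    0 < c \<and>
    Lnorm_inv (p/(p-1)) v1 (\<lambda>_. 1) {0<..<c} * Lnorm p v0 {0<..<c} = \<infinity> \<and>
    Lnorm_inv (p/(p-1)) v1 (\<lambda>_. 1) {c<..} * Lnorm p v0 {c<..} = \<infinity> \<and>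
    ab_funcs p v0 v1 a b \<and>
    set_borel_measurable lborel {0<..} g \<and> Lnorm_inv (p/(p-1)) v0 g {0<..} < \<infinity>"
  hence wc0: "weight_class p v0" and wc1: "weight_class p v1" and inv1: "loc_Lr_inv q v1"
    and ab: "ab_funcs p v0 v1 a b" and gm: "set_borel_measurable lborel {0<..} g"
    and gf: "Lnorm_inv q v0 g {0<..} < \<infinity>"
    unfolding q_def by auto
  define v0' where "v0' x = indicator {0<..} x *\<^sub>R v0 x" for x
  define v1' where "v1' x = indicator {0<..} x *\<^sub>R v1 x" for x
  define g' where "g' x = indicator {0<..} x *\<^sub>R g x" for x
  have a0: "\<And>x. 0 < x \<Longrightarrow> v0 x = v0' x" "\<And>x. 0 < x \<Longrightarrow> v1 x = v1' x" "\<And>x. 0 < x \<Longrightarrow> g x = g' x"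
    by (auto simp: v0'_def v1'_def g'_def)
  have apos: "\<And>t. 0 < t \<Longrightarrow> 0 < a t" using ab unfolding ab_funcs_def by auto
  have m0: "v0' \<in> borel_measurable lborel"
    using wc0 unfolding weight_class_def loc_Lr_def set_borel_measurable_def v0'_def by auto
  have m1: "v1' \<in> borel_measurable lborel"
    using wc1 unfolding weight_class_def loc_Lr_def set_borel_measurable_def v1'_def by auto
  have mg: "g' \<in> borel_measurable lborel"
    using gm unfolding set_borel_measurable_def g'_def by auto
  have nn1: "\<And>x. v1' x \<ge> 0" using wc1 unfolding weight_class_def v1'_def
    by (auto split: split_indicator)
  have v0loc: "\<And>x y. 0 < x \<Longrightarrow> x \<le> y \<Longrightarrow> Lnorm p v0' {x..y} < \<infinity>"
  proof -
    fix x y :: real assume xy: "0 < x" "x \<le> y"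
    have "Lnorm p v0 {x..y} < \<infinity>" using wc0 xy unfolding weight_class_def loc_Lr_def by auto
    moreover have "Lnorm p v0 {x..y} = Lnorm p v0' {x..y}"
      using xy by (intro Lnorm_cong0) (auto simp: a0)
    ultimately show "Lnorm p v0' {x..y} < \<infinity>" by simp
  qed
  have inv1': "loc_Lr_inv q v1'"
    unfolding loc_Lr_inv_def
  proof (intro allI impI)
    fix x y :: real assume xy: "0 < x" "x \<le> y"
    have "Lnorm_inv q v1 (\<lambda>_. 1) {x..y} < \<infinity>" using inv1 xy unfolding loc_Lr_inv_def by auto
    moreover have "Lnorm_inv q v1 (\<lambda>_. 1) {x..y} = Lnorm_inv q v1' (\<lambda>_. 1) {x..y}"
      using xy by (intro Lnorm_inv_cong0) (auto simp: a0)
    ultimately show "Lnorm_inv q v1' (\<lambda>_. 1) {x..y} < \<infinity>" by simp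
  qed
  have ab': "ab_funcs p v0' v1' a b" by (rule ab_cong0[OF ab]) (auto simp: a0)
  have Leq: "Lnorm_inv q v0 g {0<..} = Lnorm_inv q v0' g' {0<..}"
    by (intro Lnorm_inv_cong0) (auto simp: a0)
  have gf': "Lnorm_inv q v0' g' {0<..} < \<infinity>" using gf Leq by simp
  interpret S: setting p q v0' v1' g' a b
    by unfold_locales (use assms q_def m0 m1 mg nn1 v0loc inv1' ab' gf' in auto)
  note GGe = GG_cong0[OF a0(2) a0(3) apos, where q=q and b=b]
  have bound: "GG q v1 a b g + GGc q v1 a b g \<le> ennreal 3 * Lnorm_inv q v0 g {0<..}"
    using S.main_loc GGe Leq by simp
  thus "GG (p/(p-1)) v1 a b g + GGc (p/(p-1)) v1 a b g \<le> ennreal 3 * Lnorm_inv (p/(p-1)) v0 g {0<..}"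
    unfolding q_def .
  have locg: "\<And>x y. 0 < x \<Longrightarrow> x \<le> y \<Longrightarrow> Lnorm 1 g {x..y} < \<infinity>"
  proof -
    fix x y :: real assume xy: "0 < x" "x \<le> y"
    have "Lnorm 1 g {x..y} = Lnorm 1 g' {x..y}" using xy by (intro Lnorm_cong0) (auto simp: a0)
    thus "Lnorm 1 g {x..y} < \<infinity>" using S.loc_g[OF xy] by simp
  qed
  have fin: "GG q v1 a b g + GGc q v1 a b g < \<infinity>"
  proof -
    have "ennreal 3 * Lnorm_inv q v0 g {0<..} < \<infinity>"
      using gf by (simp add: ennreal_mult_less_top)
    thus ?thesis using bound by (rule le_less_trans[rotated])
  qed
  show "in_W (p/(p-1)) v1 a b g"
    unfolding in_W_def loc_L1_def loc_Lr_def q_def[symmetric]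
    using gm locg fin by auto
qed

end
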